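(* Let $(\vec U,\le,{}^*,\vee,\wedge)$ be a universe of separations containing a separation system $\vec S$ (with induced order and involution), and let $\mathcal F\subseteq 2^{\vec S}$ be a set of stars. Let $(T,\alpha)$ be an irredundant $S$-tree over $\mathcal F$, let $x$ be a leaf of $T$, and let $\vec e$ be the edge of $T$ at $x$ oriented away from $x$. Assume $\vec r:=\alpha(\vec e)$ is nontrivial and nondegenerate and that $\alpha(\vec e\,')\neq\vec r$ for every $\vec e\,'\in\vec E(T)$ other than $\vec e$. Let $\vec s_0\in\vec S$ be $\mathcal F$-linked to $\vec r$, and let $\alpha':=f^{\vec r}_{\vec s_0}\circ\alpha$. Then $\alpha'$ is well defined with values in $\vec S$, and $(T,\alpha')$ is an $S$-tree over $\mathcal F\cup\{\{\overleftarrow s_0\}\}$ in which $\{\overleftarrow s_0\}$ is associated with $x$ but with no other leaf of $T$.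
   Context: A separation system $(\vec S,\le,{}^* )$ is a partially ordered set with an order-reversing involution ${}^*$; write $\overleftarrow s:=\vec s^{\,*}$, a separation is $s=\{\vec s,\overleftarrow s\}$, $S$ is the set of separations, $s$ is degenerate if $\vec s=\overleftarrow s$, and $\vec r$ is trivial in $\vec S$ if there is $s\in S$ with $\vec r<\vec s$ and $\vec r<\overleftarrow s$. A star is a nonempty $\sigma\subseteq\vec S$ with $\vec r\le\overleftarrow s$ for all distinct $\vec r,\vec s\in\sigma$. A universe of separations $(\vec U,\le,{}^*,\vee,\wedge)$ is a separation system in which any two elements have a supremum $\vee$ and infimum $\wedge$. An $S$-tree is a pair $(T,\alpha)$ with $T$ a finite tree with at least one edge and $\alpha:\vec E(T)\to\vec S$ ($\vec E(T)=\{(x,y):\{x,y\}\in E(T)\}$) with $\alpha(y,x)=\alpha(x,y)^*$; $\alpha(\vec F_t)$, $\vec F_t=\{(y,t):yt\in E(T)\}$, is associated with node $t$; it is over $\mathcal F$ if $\alpha(\vec F_t)\in\mathcal F$ for all $t$; it is irredundant if no node $t$ has distinct neighbours $t',t''$ with $\alpha(t',t)=\alpha(t'',t)$. For nontrivial nondegenerate $\vec r\in\vec S$, $S_{\ge\vec r}$ is the set of $s\in S$ with an orientation $\ge\vec r$ and $\vec S_{\ge\vec r}$ the set of their orientations. For $\vec s_0\ge\vec r$ in $\vec S$, the shifting map $f^{\vec r}_{\vec s_0}:\vec S_{\ge\vec r}\to\vec U$ is given by $f(\vec s)=\vec s\vee\vec s_0$ and $f(\overleftarrow s)=(\vec s\vee\vec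 s_0)^*$ for all $\vec s\in\vec S_{\ge\vec r}\setminus\{\overleftarrow r\}$ with $\vec s\ge\vec r$. $\vec s_0\in\vec S$ is linked to $\vec r$ if $\vec s_0\ge\vec r$ and every $\vec s\in\vec S$ with $\vec s\ge\vec r$, $\vec s\ne\overleftarrow r$ satisfies $\vec s\vee\vec s_0\in\vec S$. It is $\mathcal F$-linked to $\vec r$ if it is linked to $\vec r$ and for every star $\sigma\in\mathcal F$ with $\sigma\subseteq\vec S_{\ge\vec r}\setminus\{\overleftarrow r\}$ that has an element $\ge\vec r$, the image $f^{\vec r}_{\vec s_0}(\sigma)$ lies in $\mathcal F$. *)

theory Defs
  imports Main
begin

text \<open>The universe is the carrier type 'u, a lattice (so suprema/infima exist: sup, inf),
  together with an order-reversing involution star.\<close>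
definition universe :: "('u::lattice \<Rightarrow> 'u) \<Rightarrow> bool" where
  "universe star \<longleftrightarrow> (\<forall>x. star (star x) = x) \<and> (\<forall>x y. x \<le> y \<longrightarrow> star y \<le> star x)"

definition sep_system :: "('u::lattice \<Rightarrow> 'u) \<Rightarrow> 'u set \<Rightarrow> bool" where
  "sep_system star S \<longleftrightarrow> (\<forall>s\<in>S. star s \<in> S)"

definition degenerate :: "('u::lattice \<Rightarrow> 'u) \<Rightarrow> 'u \<Rightarrow> bool" where
  "degenerate star s \<longleftrightarrow> s = star s"

definition trivial_in :: "('u::lattice \<Rightarrow> 'u) \<Rightarrow> 'u set \<Rightarrow> 'u \<Rightarrow> bool" where
  "trivial_in star S r \<longleftrightarrow> (\<exists>s\<in>S. r < s \<and> r < star s)"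

definition is_star :: "('u::lattice \<Rightarrow> 'u) \<Rightarrow> 'u set \<Rightarrow> 'u set \<Rightarrow> bool" where
  "is_star star S \<sigma> \<longleftrightarrow> \<sigma> \<noteq> {} \<and> \<sigma> \<subseteq> S \<and> (\<forall>r\<in>\<sigma>. \<forall>s\<in>\<sigma>. r \<noteq> s \<longrightarrow> r \<le> star s)"

definition S_ge :: "('u::lattice \<Rightarrow> 'u) \<Rightarrow> 'u set \<Rightarrow> 'u \<Rightarrow> 'u set" where
  "S_ge star S r = {s \<in> S. r \<le> s \<or> r \<le> star s}"

text \<open>Shifting map f^r_{s0}: f(s) = s \<squnion> s0 and f(star s) = star (s \<squnion> s0) for s \<ge> r, s \<noteq> star r.
  (Meaningful on S_ge star S r.)\<close>
definition shift :: "('u::lattice \<Rightarrow> 'u) \<Rightarrow> 'u \<Rightarrow> 'u \<Rightarrow> 'u \<Rightarrow> 'u" where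
  "shift star r s0 s = (if r \<le> s \<and> s \<noteq> star r then sup s s0 else star (sup (star s) s0))"

definition linked :: "('u::lattice \<Rightarrow> 'u) \<Rightarrow> 'u set \<Rightarrow> 'u \<Rightarrow> 'u \<Rightarrow> bool" where
  "linked star S r s0 \<longleftrightarrow> s0 \<in> S \<and> r \<le> s0 \<and>
     (\<forall>s\<in>S. r \<le> s \<and> s \<noteq> star r \<longrightarrow> sup s s0 \<in> S)"

definition F_linked :: "('u::lattice \<Rightarrow> 'u) \<Rightarrow> 'u set \<Rightarrow> 'u set set \<Rightarrow> 'u \<Rightarrow> 'u \<Rightarrow> bool" where
  "F_linked star S F r s0 \<longleftrightarrow> linked star S r s0 \<and>
     (\<forall>\<sigma>\<in>F. is_star star S \<sigma> \<and> \<sigma> \<subseteq> S_ge star S r - {star r} \<and> (\<exists>s\<in>\<sigma>. r \<le> s)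
        \<longrightarrow> shift star r s0 ` \<sigma> \<in> F)"

text \<open>A graph is given by a vertex set V and a set E of oriented edges (x,y); each
  undirected edge {x,y} appears as both (x,y) and (y,x).\<close>
definition is_cycle :: "('v \<times> 'v) set \<Rightarrow> 'v list \<Rightarrow> bool" where
  "is_cycle E cs \<longleftrightarrow> length cs \<ge> 3 \<and> distinct cs \<and>
     (\<forall>i. Suc i < length cs \<longrightarrow> (cs ! i, cs ! Suc i) \<in> E) \<and> (last cs, hd cs) \<in> E"

definition finite_tree :: "'v set \<Rightarrow> ('v \<times> 'v) set \<Rightarrow> bool" where
  "finite_tree V E \<longleftrightarrow> finite V \<and> E \<subseteq> V \<times> V \<and> E \<noteq> {} \<and>
     (\<forall>x y. (x, y) \<in> E \<longrightarrow> (y, x) \<in> E) \<and> (\<forall>x. (x, x) \<notin> E) \<and>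
     (\<forall>x\<in>V. \<forall>y\<in>V. (x, y) \<in> E\<^sup>*) \<and> (\<nexists>cs. is_cycle E cs)"

definition neighbours :: "('v \<times> 'v) set \<Rightarrow> 'v \<Rightarrow> 'v set" where
  "neighbours E t = {y. (y, t) \<in> E}"

definition is_leaf :: "'v set \<Rightarrow> ('v \<times> 'v) set \<Rightarrow> 'v \<Rightarrow> bool" where
  "is_leaf V E x \<longleftrightarrow> x \<in> V \<and> card (neighbours E x) = 1"

definition F_at :: "('v \<times> 'v) set \<Rightarrow> 'v \<Rightarrow> ('v \<times> 'v) set" where
  "F_at E t = {(y, t) | y. (y, t) \<in> E}"

definition S_tree :: "('u::lattice \<Rightarrow> 'u) \<Rightarrow> 'u set \<Rightarrow> 'v set \<Rightarrow> ('v \<times> 'v) set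
    \<Rightarrow> ('v \<times> 'v \<Rightarrow> 'u) \<Rightarrow> bool" where
  "S_tree star S V E \<alpha> \<longleftrightarrow> finite_tree V E \<and> (\<forall>e\<in>E. \<alpha> e \<in> S) \<and>
     (\<forall>x y. (x, y) \<in> E \<longrightarrow> \<alpha> (y, x) = star (\<alpha> (x, y)))"

definition over :: "'v set \<Rightarrow> ('v \<times> 'v) set \<Rightarrow> ('v \<times> 'v \<Rightarrow> 'u) \<Rightarrow> 'u set set \<Rightarrow> bool" where
  "over V E \<alpha> F \<longleftrightarrow> (\<forall>t\<in>V. \<alpha> ` F_at E t \<in> F)"

definition irredundant :: "'v set \<Rightarrow> ('v \<times> 'v) set \<Rightarrow> ('v \<times> 'v \<Rightarrow> 'u) \<Rightarrow> bool" where
  "irredundant V E \<alpha> \<longleftrightarrow> (\<nexists>t t' t''. t \<in> V \<and> (t', t) \<in> E \<and> (t'', t) \<in> E \<and> t' \<noteq> t''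
      \<and> \<alpha> (t', t) = \<alpha> (t'', t))"

end

theory Submission
  imports Defs
begin

lemma star_step:
  fixes star :: "'u::lattice \<Rightarrow> 'u"
  assumes F: "\<forall>\<sigma>\<in>F. is_star star S \<sigma>"
    and T: "S_tree star S V E \<alpha>"
    and overF: "over V E \<alpha> F"
    and irr: "irredundant V E \<alpha>"
    and uw: "(u, w) \<in> E" and vw: "(v, w) \<in> E" and uv: "u \<noteq> v"
  shows "\<alpha> (u, w) \<le> \<alpha> (w, v)"
proof -
  have ft: "finite_tree V E" and sym: "\<alpha> (w, v) = star (\<alpha> (v, w))"
    using T vw unfolding S_tree_def by auto
  have "w \<in> V" using ft uw unfolding finite_tree_def by auto
  then have "\<alpha> ` F_at E w \<in> F" using overF unfolding over_def by auto
  then have st: "is_star star S (\<alpha> ` F_at E w)" using F by auto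
  have "\<alpha> (u, w) \<in> \<alpha> ` F_at E w" "\<alpha> (v, w) \<in> \<alpha> ` F_at E w"
    using uw vw unfolding F_at_def by auto
  moreover have "\<alpha> (u, w) \<noteq> \<alpha> (v, w)"
    using irr uw vw uv \<open>w \<in> V\<close> unfolding irredundant_def by blast
  ultimately show ?thesis using st sym unfolding is_star_def by auto
qed

lemma nbr_leaf:
  assumes leaf: "is_leaf V E x" and yx: "(y, x) \<in> E" and zx: "(z, x) \<in> E"
  shows "z = y"
proof -
  have "card (neighbours E x) = 1" using leaf unfolding is_leaf_def by auto
  then obtain a where "neighbours E x = {a}" using card_1_singletonE by blast
  then have "y = a" "z = a" using yx zx unfolding neighbours_def by (metis mem_Collect_eq singletonD)+
  then show ?thesis by simp
qed

lemma dist_step: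
  fixes star :: "'u::lattice \<Rightarrow> 'u"
  assumes F: "\<forall>\<sigma>\<in>F. is_star star S \<sigma>"
    and T: "S_tree star S V E \<alpha>"
    and overF: "over V E \<alpha> F"
    and irr: "irredundant V E \<alpha>"
    and leaf: "is_leaf V E x"
    and e: "(x, y) \<in> E"
  shows "(x, v) \<in> E ^^ Suc n \<Longrightarrow> (\<forall>m<Suc n. (x, v) \<notin> E ^^ m) \<Longrightarrow>
     \<exists>u. (u, v) \<in> E \<and> \<alpha> (x, y) \<le> \<alpha> (u, v) \<and> (x, u) \<in> E ^^ n"
proof (induction n arbitrary: v)
  case 0
  have sym: "\<forall>a b. (a, b) \<in> E \<longrightarrow> (b, a) \<in> E"
    using T unfolding S_tree_def finite_tree_def by auto
  from 0 have "(x, v) \<in> E" by auto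
  then have "v = y" using nbr_leaf[OF leaf] sym e by blast
  then show ?case using e by auto
next
  case (Suc n)
  from Suc.prems(1) obtain w where xw: "(x, w) \<in> E ^^ Suc n" and wv: "(w, v) \<in> E"
    by (metis relpow_Suc_E)
  have minw: "\<forall>m<Suc n. (x, w) \<notin> E ^^ m"
  proof (intro allI impI)
    fix m assume "m < Suc n"
    show "(x, w) \<notin> E ^^ m"
    proof
      assume "(x, w) \<in> E ^^ m"
      then have "(x, v) \<in> E ^^ Suc m" using wv by (rule relpow_Suc_I)
      moreover have "Suc m < Suc (Suc n)" using \<open>m < Suc n\<close> by simp
      ultimately show False using Suc.prems(2) by blast
    qed
  qed
  from Suc.IH[OF xw minw] obtain u where uw: "(u, w) \<in> E" and r: "\<alpha> (x, y) \<le> \<alpha> (u, w)"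
    and xu: "(x, u) \<in> E ^^ n" by blast
  have "u \<noteq> v" using xu Suc.prems(2) by auto
  have sym: "\<forall>a b. (a, b) \<in> E \<longrightarrow> (b, a) \<in> E"
    using T unfolding S_tree_def finite_tree_def by auto
  have "\<alpha> (u, w) \<le> \<alpha> (w, v)"
    using star_step[OF F T overF irr uw _ \<open>u \<noteq> v\<close>] sym wv by blast
  then show ?case using r xw wv by (meson order_trans)
qed

lemma good_in:
  fixes star :: "'u::lattice \<Rightarrow> 'u"
  assumes F: "\<forall>\<sigma>\<in>F. is_star star S \<sigma>"
    and T: "S_tree star S V E \<alpha>"
    and overF: "over V E \<alpha> F"
    and irr: "irredundant V E \<alpha>"
    and leaf: "is_leaf V E x"
    and e: "(x, y) \<in> E"
    and v: "v \<in> V" "v \<noteq> x"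
  shows "\<exists>u. (u, v) \<in> E \<and> \<alpha> (x, y) \<le> \<alpha> (u, v)"
proof -
  have "x \<in> V" using leaf unfolding is_leaf_def by auto
  then have "(x, v) \<in> E\<^sup>*" using T v unfolding S_tree_def finite_tree_def by auto
  then obtain n where "(x, v) \<in> E ^^ n" using rtrancl_power by blast
  define k where "k = (LEAST n. (x, v) \<in> E ^^ n)"
  have k1: "(x, v) \<in> E ^^ k" unfolding k_def by (rule LeastI) fact
  have k2: "\<forall>m<k. (x, v) \<notin> E ^^ m" unfolding k_def using not_less_Least by blast
  have "k \<noteq> 0"
  proof
    assume "k = 0" then show False using k1 v by simp
  qed
  then obtain j where "k = Suc j" using not0_implies_Suc by blast
  then show ?thesis using dist_step[OF F T overF irr leaf e, of v j] k1 k2 by blast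
qed


theorem lemma4p3:
  fixes star :: "'u::lattice \<Rightarrow> 'u"
    and S :: "'u set" and F :: "'u set set"
    and V :: "'v set" and E :: "('v \<times> 'v) set" and \<alpha> :: "'v \<times> 'v \<Rightarrow> 'u"
    and x y :: 'v and s0 :: 'u
  assumes U: "universe star"
    and S: "sep_system star S"
    and F: "\<forall>\<sigma>\<in>F. is_star star S \<sigma>"
    and T: "S_tree star S V E \<alpha>"
    and overF: "over V E \<alpha> F"
    and irr: "irredundant V E \<alpha>"
    and leaf: "is_leaf V E x"
    and e: "(x, y) \<in> E"
    and nontriv: "\<not> trivial_in star S (\<alpha> (x, y))"
    and nondeg: "\<not> degenerate star (\<alpha> (x, y))"
    and uniq: "\<forall>e'\<in>E. e' \<noteq> (x, y) \<longrightarrow> \<alpha> e' \<noteq> \<alpha> (x, y)"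
    and s0: "s0 \<in> S"
    and Flinked: "F_linked star S F (\<alpha> (x, y)) s0"
  shows "(\<forall>e'\<in>E. \<alpha> e' \<in> S_ge star S (\<alpha> (x, y)))
     \<and> (\<forall>e'\<in>E. shift star (\<alpha> (x, y)) s0 (\<alpha> e') \<in> S)
     \<and> S_tree star S V E (shift star (\<alpha> (x, y)) s0 \<circ> \<alpha>)
     \<and> over V E (shift star (\<alpha> (x, y)) s0 \<circ> \<alpha>) (F \<union> {{star s0}})
     \<and> (shift star (\<alpha> (x, y)) s0 \<circ> \<alpha>) ` F_at E x = {star s0}
     \<and> (\<forall>z. is_leaf V E z \<and> z \<noteq> x \<longrightarrow> (shift star (\<alpha> (x, y)) s0 \<circ> \<alpha>) ` F_at E z \<noteq> {star s0})"
proof -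
  define r where "r = \<alpha> (x, y)"
  define f where "f = shift star r s0"
  have inv: "\<And>a. star (star a) = a" and anti: "\<And>a b. a \<le> b \<Longrightarrow> star b \<le> star a"
    using U unfolding universe_def by auto
  have ft: "finite_tree V E" and inS: "\<forall>e\<in>E. \<alpha> e \<in> S"
    and asym: "\<And>a b. (a, b) \<in> E \<Longrightarrow> \<alpha> (b, a) = star (\<alpha> (a, b))"
    using T unfolding S_tree_def by auto
  have sym: "\<And>a b. (a, b) \<in> E \<Longrightarrow> (b, a) \<in> E" and EV: "E \<subseteq> V \<times> V"
    using ft unfolding finite_tree_def by auto
  have rS: "r \<in> S" using inS e r_def by auto
  have nd: "r \<noteq> star r" using nondeg r_def unfolding degenerate_def by auto
  have nt: "\<And>s. s \<in> S \<Longrightarrow> r \<le> s \<Longrightarrow> r \<le> star s \<Longrightarrow> r = s \<or> r = star s"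
    using nontriv r_def unfolding trivial_in_def by (auto simp: less_le)
  have lk: "linked star S r s0" using Flinked r_def unfolding F_linked_def by auto
  have rs0: "r \<le> s0" using lk unfolding linked_def by auto
  have supS: "\<And>s. s \<in> S \<Longrightarrow> r \<le> s \<Longrightarrow> s \<noteq> star r \<Longrightarrow> sup s s0 \<in> S"
    using lk unfolding linked_def by auto
  have starS: "\<And>s. s \<in> S \<Longrightarrow> star s \<in> S" using S unfolding sep_system_def by auto
  have good: "\<And>v. v \<in> V \<Longrightarrow> v \<noteq> x \<Longrightarrow> \<exists>u. (u, v) \<in> E \<and> r \<le> \<alpha> (u, v)"
    using good_in[OF F T overF irr leaf e] r_def by blast
  have step: "\<And>u w v. (u, w) \<in> E \<Longrightarrow> (v, w) \<in> E \<Longrightarrow> u \<noteq> v \<Longrightarrow> \<alpha> (u, w) \<le> \<alpha> (w, v)"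
    using star_step[OF F T overF irr] by blast
  have uq: "\<And>a b. (a, b) \<in> E \<Longrightarrow> \<alpha> (a, b) = r \<Longrightarrow> a = x \<and> b = y"
    using uniq r_def by blast
  have ori: "\<And>a b. (a, b) \<in> E \<Longrightarrow> r \<le> \<alpha> (a, b) \<or> r \<le> star (\<alpha> (a, b))"
  proof -
    fix a b assume ab: "(a, b) \<in> E"
    show "r \<le> \<alpha> (a, b) \<or> r \<le> star (\<alpha> (a, b))"
    proof (cases "a = x")
      case True
      then have "b = y" using nbr_leaf[OF leaf] sym ab e by blast
      then show ?thesis using True r_def by auto
    next
      case False
      have "a \<in> V" using ab EV by auto
      then obtain u where ua: "(u, a) \<in> E" and ru: "r \<le> \<alpha> (u, a)" using good False by blast
      show ?thesis
      proof (cases "u = b")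
        case True
        then show ?thesis using ru asym ab by auto
      next
        case False
        then have "\<alpha> (u, a) \<le> \<alpha> (a, b)" using step[OF ua sym[OF ab]] by auto
        then show ?thesis using ru by auto
      qed
    qed
  qed
  have C1: "\<forall>e'\<in>E. \<alpha> e' \<in> S_ge star S r"
    using ori inS unfolding S_ge_def by auto
  have fS: "\<And>s. s \<in> S \<Longrightarrow> r \<le> s \<or> r \<le> star s \<Longrightarrow> f s \<in> S"
  proof -
    fix s assume sS: "s \<in> S" and o: "r \<le> s \<or> r \<le> star s"
    show "f s \<in> S"
    proof (cases "r \<le> s \<and> s \<noteq> star r")
      case True
      then show ?thesis using supS sS unfolding f_def shift_def by auto
    next
      case False
      then have fs: "f s = star (sup (star s) s0)" unfolding f_def shift_def by auto
      show ?thesis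
      proof (cases "s = star r")
        case True
        then have "sup (star s) s0 = s0" using inv rs0 by (simp add: sup_absorb2)
        then show ?thesis using fs starS s0 by auto
      next
        case False
        then have "\<not> r \<le> s" using \<open>\<not> (r \<le> s \<and> s \<noteq> star r)\<close> by auto
        then have "r \<le> star s" using o by auto
        moreover have "star s \<noteq> star r" using \<open>\<not> r \<le> s\<close> inv by (metis order_refl)
        ultimately show ?thesis using fs supS starS sS by auto
      qed
    qed
  qed
  have C2: "\<forall>e'\<in>E. f (\<alpha> e') \<in> S" using fS ori inS by auto
  have fstar: "\<And>s. s \<in> S \<Longrightarrow> r \<le> s \<or> r \<le> star s \<Longrightarrow> f (star s) = star (f s)"
  proof -
    fix s assume sS: "s \<in> S" and o: "r \<le> s \<or> r \<le> star s"
    show "f (star s) = star (f s)"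
    proof (cases "r \<le> s \<and> s \<noteq> star r")
      case True
      have "\<not> (r \<le> star s \<and> star s \<noteq> star r)"
      proof
        assume h: "r \<le> star s \<and> star s \<noteq> star r"
        then have "r = s \<or> r = star s" using nt sS True by auto
        then show False using h True inv by metis
      qed
      then have "f (star s) = star (sup (star (star s)) s0)" unfolding f_def shift_def by metis
      moreover have "f s = sup s s0" using True unfolding f_def shift_def by metis
      ultimately show ?thesis using inv by simp
    next
      case False
      show ?thesis
      proof (cases "r \<le> star s \<and> star s \<noteq> star r")
        case True
        then have "f (star s) = sup (star s) s0" unfolding f_def shift_def by metis
        moreover have "f s = star (sup (star s) s0)" using False unfolding f_def shift_def by metis
        ultimately show ?thesis using inv by simp
      next
        case False2: False
        have False
        proof (cases "r \<le> s")
          case True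
          then have "s = star r" using False by auto
          then have "star s = r" using inv by simp
          then have "star s = star r" using False2 by auto
          then show False using \<open>s = star r\<close> \<open>star s = r\<close> nd by simp
        next
          case nrs: False
          then have "r \<le> star s" using o by auto
          then have "star s = star r" using False2 by auto
          then have "s = r" using inv by metis
          then show False using nrs by simp
        qed
        then show ?thesis ..
      qed
    qed
  qed
  have C3: "S_tree star S V E (f \<circ> \<alpha>)"
    unfolding S_tree_def using ft C2 fstar asym inS ori by auto
  have Fx: "F_at E x = {(y, x)}"
    using nbr_leaf[OF leaf] sym e unfolding F_at_def by blast
  have fsr: "f (star r) = star s0"
  proof -
    have "\<not> (r \<le> star r \<and> star r \<noteq> star r)" by auto
    then have "f (star r) = star (sup (star (star r)) s0)" unfolding f_def shift_def by metis
    also have "\<dots> = star s0" using inv rs0 by (simp add: sup_absorb2)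
    finally show ?thesis .
  qed
  have C5: "(f \<circ> \<alpha>) ` F_at E x = {star s0}"
    using Fx asym[OF e] fsr r_def by auto
  have other: "\<And>t. t \<in> V \<Longrightarrow> t \<noteq> x \<Longrightarrow> (f \<circ> \<alpha>) ` F_at E t \<in> F \<and>
       (\<exists>s\<in>\<alpha> ` F_at E t. r \<le> s \<and> s \<noteq> star r)"
  proof -
    fix t assume tV: "t \<in> V" and tx: "t \<noteq> x"
    let ?\<sigma> = "\<alpha> ` F_at E t"
    have sF: "?\<sigma> \<in> F" using overF tV unfolding over_def by auto
    have nsr: "star r \<notin> ?\<sigma>"
    proof
      assume "star r \<in> ?\<sigma>"
      then obtain u where ut: "(u, t) \<in> E" and "\<alpha> (u, t) = star r" unfolding F_at_def by auto
      then have "\<alpha> (t, u) = r" using asym[OF ut] inv by metis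
      then show False using uq sym[OF ut] tx by blast
    qed
    obtain u where ut: "(u, t) \<in> E" and ru: "r \<le> \<alpha> (u, t)" using good tV tx by blast
    have mem: "\<alpha> (u, t) \<in> ?\<sigma>" using ut unfolding F_at_def by auto
    have sub: "?\<sigma> \<subseteq> S_ge star S r - {star r}"
    proof -
      have "?\<sigma> \<subseteq> S_ge star S r" using C1 unfolding F_at_def by auto
      then show ?thesis using nsr by blast
    qed
    have "is_star star S ?\<sigma>" using F sF by auto
    then have "f ` ?\<sigma> \<in> F" using Flinked sF sub mem ru r_def f_def
      unfolding F_linked_def by blast
    moreover have "f ` ?\<sigma> = (f \<circ> \<alpha>) ` F_at E t" by (simp add: image_comp)
    ultimately show "(f \<circ> \<alpha>) ` F_at E t \<in> F \<and> (\<exists>s\<in>?\<sigma>. r \<le> s \<and> s \<noteq> star r)"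
      using mem ru nsr by metis
  qed
  have C4: "over V E (f \<circ> \<alpha>) (F \<union> {{star s0}})"
    unfolding over_def using other C5 by auto
  have C6: "\<forall>z. is_leaf V E z \<and> z \<noteq> x \<longrightarrow> (f \<circ> \<alpha>) ` F_at E z \<noteq> {star s0}"
  proof (intro allI impI notI)
    fix z assume zl: "is_leaf V E z \<and> z \<noteq> x" and eq: "(f \<circ> \<alpha>) ` F_at E z = {star s0}"
    then have "z \<in> V" unfolding is_leaf_def by auto
    then obtain s where sm: "s \<in> \<alpha> ` F_at E z" and rs: "r \<le> s" and ssr: "s \<noteq> star r"
      using other zl by blast
    have "f s \<in> (f \<circ> \<alpha>) ` F_at E z" using sm by auto
    then have fs: "f s = star s0" using eq by auto
    have "f s = sup s s0" using rs ssr unfolding f_def shift_def by auto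
    then have eq2: "sup s s0 = star s0" using fs by auto
    have "s0 \<le> star s0" using eq2 by (metis sup.cobounded2)
    have "s \<le> star s0" using eq2 by (metis sup.cobounded1)
    then have "r \<le> star s0" using rs by auto
    then have "r = s0 \<or> r = star s0" using nt s0 rs0 by auto
    then show False
    proof
      assume "r = s0"
      then have "sup s s0 = s" using rs by (simp add: sup_absorb1)
      then show False using eq2 ssr \<open>r = s0\<close> by auto
    next
      assume "r = star s0"
      then have "s0 \<le> r" using \<open>s0 \<le> star s0\<close> by auto
      then have "s0 = r" using rs0 by auto
      then show False using \<open>r = star s0\<close> nd by auto
    qed
  qed
  show ?thesis using C1 C2 C3 C4 C5 C6 unfolding f_def r_def by auto
qed

end
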